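(* Let $f(\mathbf{x};\boldsymbol{\theta})=g(\mathbf{W}\mathbf{x};\bar{\boldsymbol{\theta}})$ be a network from $\mathbb{R}^{P}$ to $\mathbb{R}^{N}$ whose first layer is linear with weight $\mathbf{W}\in\mathbb{R}^{d\times P}$, with parameter vector $\boldsymbol{\theta}=(\theta_1,\dots,\theta_m)$ consisting of the entries of $\mathbf{W}$ together with the remaining parameters $\bar{\boldsymbol{\theta}}$, and $g$ differentiable in its first argument and twice differentiable in the parameters. Let $(\mathbf{x}_i,\mathbf{y}_i)_{i=1}^n$ be training data, with $x^{(i)}_p$ the $p$-th entry of $\mathbf{x}_i$. Suppose $\varepsilon,M_0>0$ are such that $\|f(\mathbf{x}_i,\boldsymbol{\theta})-\mathbf{y}_i\|_2<\varepsilon$ for all $i$ and $|\theta_j|^2\|\partial^2 f(\mathbf{x}_i,\boldsymbol{\theta})/\partial\theta_j^2\|_2<M_0$ for all $i,j$. Then $$\frac1n\sum_{i=1}^n\sum_{j=1}^m|\theta_j|^2\Big\|\frac{\partial f(\mathbf{x}_i,\boldsymbol{\theta})}{\partial\theta_j}\Big\|_2^2\;\ge\;\frac{1}{nd}\sum_{i=1}^n\sum_{p=1}^{P}\Big\|\frac{\partial f(\mathbf{x}_i,\boldsymbol{\theta})}{\partial x_p}\Big\|_2^2\,(x_p^{(i)})^2.$$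
   Context: The right-hand side, $\frac1n\sum_i\sum_p\|\partial f/\partial x_p(\mathbf{x}_i)\|_2^2 (x_p^{(i)})^2$, is called the input-invariant MLS (up to the factor $1/d$); the left-hand side is, up to $O(\varepsilon)$, the elementwise-adaptive sharpness $\operatorname{Tr}(\nabla^2_{\boldsymbol{\theta}}L(\boldsymbol{\theta})\odot|\boldsymbol{\theta}||\boldsymbol{\theta}|^T)$ of the MSE loss $L(\boldsymbol{\theta})=\frac1n\sum_i\frac12\|f(\mathbf{x}_i,\boldsymbol{\theta})-\mathbf{y}_i\|_2^2$. Here $d$ is the number of rows of the first-layer weight matrix $\mathbf{W}$. *)

theory Defs
  imports "HOL-Analysis.Analysis"
begin

definition vupd :: "'a^'n \<Rightarrow> 'n \<Rightarrow> 'a \<Rightarrow> 'a^'n" where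
  "vupd v j t = (\<chi> j'. if j' = j then t else v $ j')"

definition mupd :: "'a^'p^'d \<Rightarrow> 'd \<Rightarrow> 'p \<Rightarrow> 'a \<Rightarrow> 'a^'p^'d" where
  "mupd W k p t = (\<chi> k' p'. if k' = k \<and> p' = p then t else W $ k' $ p')"

definition net :: "(real^'d \<Rightarrow> real^'q \<Rightarrow> real^'N) \<Rightarrow> real^'P \<Rightarrow> real^'P^'d \<Rightarrow> real^'q \<Rightarrow> real^'N" where
  "net g x W thb = g (W *v x) thb"

definition dW :: "(real^'d \<Rightarrow> real^'q \<Rightarrow> real^'N) \<Rightarrow> real^'P \<Rightarrow> real^'P^'d \<Rightarrow> real^'q \<Rightarrow> 'd \<Rightarrow> 'P \<Rightarrow> real^'N" where
  "dW g x W thb k p = vector_derivative (\<lambda>t. net g x (mupd W k p t) thb) (at (W $ k $ p))"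

definition dW2 :: "(real^'d \<Rightarrow> real^'q \<Rightarrow> real^'N) \<Rightarrow> real^'P \<Rightarrow> real^'P^'d \<Rightarrow> real^'q \<Rightarrow> 'd \<Rightarrow> 'P \<Rightarrow> real^'N" where
  "dW2 g x W thb k p = vector_derivative
     (\<lambda>s. vector_derivative (\<lambda>t. net g x (mupd W k p t) thb) (at s)) (at (W $ k $ p))"

definition dT :: "(real^'d \<Rightarrow> real^'q \<Rightarrow> real^'N) \<Rightarrow> real^'P \<Rightarrow> real^'P^'d \<Rightarrow> real^'q \<Rightarrow> 'q \<Rightarrow> real^'N" where
  "dT g x W thb j = vector_derivative (\<lambda>t. net g x W (vupd thb j t)) (at (thb $ j))"

definition dT2 :: "(real^'d \<Rightarrow> real^'q \<Rightarrow> real^'N) \<Rightarrow> real^'P \<Rightarrow> real^'P^'d \<Rightarrow> real^'q \<Rightarrow> 'q \<Rightarrow> real^'N" where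
  "dT2 g x W thb j = vector_derivative
     (\<lambda>s. vector_derivative (\<lambda>t. net g x W (vupd thb j t)) (at s)) (at (thb $ j))"

definition dX :: "(real^'d \<Rightarrow> real^'q \<Rightarrow> real^'N) \<Rightarrow> real^'P \<Rightarrow> real^'P^'d \<Rightarrow> real^'q \<Rightarrow> 'P \<Rightarrow> real^'N" where
  "dX g x W thb p = vector_derivative (\<lambda>t. net g (vupd x p t) W thb) (at (x $ p))"

end

theory Submission
  imports Defs
begin

lemma vd_affine:
  fixes h :: "'a::real_normed_vector \<Rightarrow> 'b::real_normed_vector"
  assumes "(h has_derivative D) (at (a + t0 *\<^sub>R v))"
  shows "vector_derivative (\<lambda>t. h (a + t *\<^sub>R v)) (at t0) = D v"
proof -
  have l: "linear D" using assms has_derivative_linear by blast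
  have "((\<lambda>t::real. a + t *\<^sub>R v) has_derivative (\<lambda>t. t *\<^sub>R v)) (at t0)"
    by (auto intro!: derivative_eq_intros)
  from diff_chain_at[OF this assms]
  have "((\<lambda>t. h (a + t *\<^sub>R v)) has_derivative (\<lambda>t. t *\<^sub>R D v)) (at t0)"
    by (simp add: o_def linear_scale[OF l])
  then have "((\<lambda>t. h (a + t *\<^sub>R v)) has_vector_derivative D v) (at t0)"
    by (simp add: has_vector_derivative_def)
  then show ?thesis by (rule vector_derivative_at)
qed

lemma norm_sum_sq:
  fixes f :: "'k::finite \<Rightarrow> 'b::real_normed_vector"
  shows "(norm (\<Sum>k\<in>UNIV. f k))^2 \<le> real CARD('k) * (\<Sum>k\<in>UNIV. (norm (f k))^2)"
proof -
  have "norm (\<Sum>k\<in>UNIV. f k) \<le> (\<Sum>k\<in>UNIV. norm (f k))" by (rule norm_sum)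
  hence "(norm (\<Sum>k\<in>UNIV. f k))^2 \<le> (\<Sum>k\<in>UNIV. norm (f k))^2"
    by (simp add: power_mono)
  also have "\<dots> = (\<Sum>k\<in>UNIV. norm (f k) * 1)^2" by simp
  also have "\<dots> \<le> (\<Sum>k\<in>UNIV. (norm (f k))^2) * (\<Sum>k\<in>(UNIV::'k set). 1^2)"
    by (rule Cauchy_Schwarz_ineq_sum)
  finally show ?thesis by (simp add: mult.commute)
qed

lemma sum_if_one:
  fixes f :: "'k::finite \<Rightarrow> real"
  shows "(\<Sum>j\<in>UNIV. (if j = p then u else f j)) = (\<Sum>j\<in>UNIV. f j) - f p + u"
proof -
  have "(\<Sum>j\<in>UNIV. (if j = p then u else f j)) = u + (\<Sum>j\<in>UNIV-{p}. f j)"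
    by (simp add: sum.remove[of UNIV p])
  also have "(\<Sum>j\<in>UNIV-{p}. f j) = (\<Sum>j\<in>UNIV. f j) - f p"
    by (simp add: sum_diff1)
  finally show ?thesis by simp
qed

lemma if_distrib_arg: "(if c then a else b) * (z::real) = (if c then a * z else b * z)" by simp

lemma times_if_one: "(a::real) * (if c then 1 else 0) = (if c then a else 0)" by simp

lemma per_sample:
  fixes g :: "real^'d \<Rightarrow> real^'q \<Rightarrow> real^'N"
    and W :: "real^'P^'d" and thb :: "real^'q" and x :: "real^'P"
  assumes gd: "\<And>z th. (\<lambda>z. g z th) differentiable (at z)"
  shows "(\<Sum>p\<in>UNIV. (norm (dX g x W thb p))^2 * (x $ p)^2)
     \<le> real CARD('d) * (\<Sum>k\<in>UNIV. \<Sum>p\<in>UNIV. \<bar>W $ k $ p\<bar>^2 * (norm (dW g x W thb k p))^2)"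
proof -
  obtain D where D: "((\<lambda>z. g z thb) has_derivative D) (at (W *v x))"
    using gd[where z="W *v x" and th=thb] unfolding differentiable_def by blast
  have l: "linear D" using D has_derivative_linear by blast
  define G where "G k = D (axis k 1)" for k
  have dW: "dW g x W thb k p = (x $ p) *\<^sub>R G k" for k p
  proof -
    define a where "a = W *v x - (W $ k $ p * x $ p) *\<^sub>R axis k (1::real)"
    define v where "v = (x $ p) *\<^sub>R axis k (1::real)"
    have eq: "mupd W k p t *v x = a + t *\<^sub>R v" for t
    proof -
      have "(\<Sum>j\<in>UNIV. (if j = p then t else W $ k $ j) * x $ j)
          = (\<Sum>j\<in>UNIV. W $ k $ j * x $ j) - W $ k $ p * x $ p + t * x $ p"
      proof -
        have "(\<Sum>j\<in>UNIV. (if j = p then t else W $ k $ j) * x $ j)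
            = (\<Sum>j\<in>UNIV. if j = p then t * x $ p else W $ k $ j * x $ j)"
          by (rule sum.cong) auto
        then show ?thesis
          using sum_if_one[where p=p and f="\<lambda>j. W $ k $ j * x $ j" and u="t * x $ p"] by simp
      qed
      note S = this
      show ?thesis unfolding vec_eq_iff
      proof
        fix k'
        show "(mupd W k p t *v x) $ k' = (a + t *\<^sub>R v) $ k'"
        proof (cases "k' = k")
          case True
          then show ?thesis using S
            by (simp add: mupd_def matrix_vector_mult_def a_def v_def axis_def)
        next
          case False
          then show ?thesis
            by (simp add: mupd_def matrix_vector_mult_def a_def v_def axis_def)
        qed
      qed
    qed
    have "a + (W $ k $ p) *\<^sub>R v = W *v x" by (simp add: a_def v_def)
    then have D': "((\<lambda>z. g z thb) has_derivative D) (at (a + (W $ k $ p) *\<^sub>R v))" using D by simp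
    have "dW g x W thb k p = vector_derivative (\<lambda>t. g (a + t *\<^sub>R v) thb) (at (W $ k $ p))"
      unfolding dW_def net_def eq ..
    also have "\<dots> = D v" by (rule vd_affine[OF D'])
    finally show ?thesis by (simp add: v_def G_def linear_scale[OF l])
  qed
  have dX: "dX g x W thb p = (\<Sum>k\<in>UNIV. (W $ k $ p) *\<^sub>R G k)" for p
  proof -
    define c :: "real^'d" where "c = (\<chi> k. W $ k $ p)"
    define a where "a = W *v x - (x $ p) *\<^sub>R c"
    have eq: "W *v vupd x p t = a + t *\<^sub>R c" for t
    proof -
      have S: "(\<Sum>j\<in>UNIV. W $ k $ j * (if j = p then t else x $ j))
          = (\<Sum>j\<in>UNIV. W $ k $ j * x $ j) - W $ k $ p * x $ p + W $ k $ p * t" for k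
      proof -
        have "(\<Sum>j\<in>UNIV. W $ k $ j * (if j = p then t else x $ j))
            = (\<Sum>j\<in>UNIV. if j = p then W $ k $ p * t else W $ k $ j * x $ j)"
          by (rule sum.cong) auto
        then show ?thesis
          using sum_if_one[where p=p and f="\<lambda>j. W $ k $ j * x $ j" and u="W $ k $ p * t"] by simp
      qed
      show ?thesis unfolding vec_eq_iff
        using S by (simp add: vupd_def matrix_vector_mult_def a_def c_def algebra_simps)
    qed
    have "a + (x $ p) *\<^sub>R c = W *v x" by (simp add: a_def)
    then have D': "((\<lambda>z. g z thb) has_derivative D) (at (a + (x $ p) *\<^sub>R c))" using D by simp
    have "dX g x W thb p = vector_derivative (\<lambda>t. g (a + t *\<^sub>R c) thb) (at (x $ p))"
      unfolding dX_def net_def eq ..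
    also have "\<dots> = D c" by (rule vd_affine[OF D'])
    also have "c = (\<Sum>k\<in>UNIV. (W $ k $ p) *\<^sub>R axis k 1)"
      by (simp add: c_def vec_eq_iff axis_def times_if_one)
    finally show ?thesis
      by (simp add: G_def linear_sum[OF l] linear_scale[OF l])
  qed
  have "(\<Sum>p\<in>UNIV. (norm (dX g x W thb p))^2 * (x $ p)^2)
     \<le> (\<Sum>p\<in>UNIV. (real CARD('d) * (\<Sum>k\<in>UNIV. (norm ((W $ k $ p) *\<^sub>R G k))^2)) * (x $ p)^2)"
    unfolding dX by (intro sum_mono mult_right_mono norm_sum_sq) auto
  also have "\<dots> = real CARD('d) * (\<Sum>k\<in>UNIV. \<Sum>p\<in>UNIV. \<bar>W $ k $ p\<bar>^2 * (norm (dW g x W thb k p))^2)"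
  proof -
    have "(\<Sum>p\<in>UNIV. (real CARD('d) * (\<Sum>k\<in>UNIV. (norm ((W $ k $ p) *\<^sub>R G k))^2)) * (x $ p)^2)
       = real CARD('d) * (\<Sum>p\<in>UNIV. \<Sum>k\<in>UNIV. (W $ k $ p)^2 * (x $ p)^2 * (norm (G k))^2)"
      by (simp add: sum_distrib_left sum_distrib_right power_mult_distrib mult_ac)
    also have "(\<Sum>p\<in>UNIV. \<Sum>k\<in>UNIV. (W $ k $ p)^2 * (x $ p)^2 * (norm (G k))^2)
       = (\<Sum>k\<in>UNIV. \<Sum>p\<in>UNIV. (W $ k $ p)^2 * (x $ p)^2 * (norm (G k))^2)"
      by (rule sum.swap)
    also have "\<dots> = (\<Sum>k\<in>UNIV. \<Sum>p\<in>UNIV. \<bar>W $ k $ p\<bar>^2 * (norm (dW g x W thb k p))^2)"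
      unfolding dW by (simp add: power_mult_distrib mult_ac)
    finally show ?thesis .
  qed
  finally show ?thesis .
qed

theorem proposition5:
  fixes g :: "real^'d \<Rightarrow> real^'q \<Rightarrow> real^'N"
    and W :: "real^'P^'d" and thb :: "real^'q"
    and n :: nat and x :: "nat \<Rightarrow> real^'P" and y :: "nat \<Rightarrow> real^'N"
    and \<epsilon> M0 :: real
  assumes g_diff_input: "\<And>z th. (\<lambda>z. g z th) differentiable (at z)"
    and g_diff_param: "\<And>z th. (\<lambda>th. g z th) differentiable (at th)"
    and g_diff2_param: "\<And>z th j. (\<lambda>th. vector_derivative (\<lambda>t. g z (vupd th j t)) (at (th $ j)))
                                   differentiable (at th)"
    and eps_pos: "\<epsilon> > 0" and M0_pos: "M0 > 0"
    and fit: "\<And>i. i < n \<Longrightarrow> norm (net g (x i) W thb - y i) < \<epsilon>"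
    and curvW: "\<And>i k p. i < n \<Longrightarrow> \<bar>W $ k $ p\<bar>^2 * norm (dW2 g (x i) W thb k p) < M0"
    and curvT: "\<And>i j. i < n \<Longrightarrow> \<bar>thb $ j\<bar>^2 * norm (dT2 g (x i) W thb j) < M0"
  shows "(1 / real n) * (\<Sum>i<n. (\<Sum>k\<in>UNIV. \<Sum>p\<in>UNIV. \<bar>W $ k $ p\<bar>^2 * (norm (dW g (x i) W thb k p))^2)
                                + (\<Sum>j\<in>UNIV. \<bar>thb $ j\<bar>^2 * (norm (dT g (x i) W thb j))^2))
         \<ge> (1 / (real n * real CARD('d))) *
             (\<Sum>i<n. \<Sum>p\<in>UNIV. (norm (dX g (x i) W thb p))^2 * (x i $ p)^2)"
proof -
  define L where "L i = (\<Sum>k\<in>UNIV. \<Sum>p\<in>UNIV. \<bar>W $ k $ p\<bar>^2 * (norm (dW g (x i) W thb k p))^2)" for i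
  define T where "T i = (\<Sum>j\<in>UNIV. \<bar>thb $ j\<bar>^2 * (norm (dT g (x i) W thb j))^2)" for i
  define R where "R i = (\<Sum>p\<in>UNIV. (norm (dX g (x i) W thb p))^2 * (x i $ p)^2)" for i
  have dpos: "real CARD('d) > 0" by simp
  have T0: "T i \<ge> 0" for i unfolding T_def by (intro sum_nonneg) auto
  have "R i / real CARD('d) \<le> L i" for i
    using per_sample[OF g_diff_input, where W=W and x="x i" and thb=thb] dpos
    by (simp add: R_def L_def divide_le_eq mult.commute)
  hence "(\<Sum>i<n. R i / real CARD('d)) \<le> (\<Sum>i<n. L i + T i)"
    using T0 by (intro sum_mono) (smt (verit))
  hence "(1 / real n) * (\<Sum>i<n. R i / real CARD('d)) \<le> (1 / real n) * (\<Sum>i<n. L i + T i)"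
    by (intro mult_left_mono) auto
  moreover have "(1 / real n) * (\<Sum>i<n. R i / real CARD('d)) = (1 / (real n * real CARD('d))) * (\<Sum>i<n. R i)"
    by (simp add: sum_divide_distrib[symmetric])
  ultimately show ?thesis unfolding L_def T_def R_def by simp
qed

end
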